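(* Fix $x,y\in Y_{G,b,P_\delta}$, $(u_x,v_x)\in[Q_x]$, $(u_y,v_y)\in[Q_y]$ and $w\in\Delta P$ (identified with an element of $P$), and write $$s^{-1}(u_xxv_x^{-1})\,s^{-1}(wu_yyv_y^{-1}w^{-1})=\sum_{\substack{z\in Z\\(u'_z,v'_z)\in A_z}}\alpha_z\,s^{-1}(u'_zz(v'_z)^{-1})$$ with $Z\subseteq Y_{G,b,P_\delta}$, $A_z\subseteq P\times P$, $\alpha_z\in k$. Let $W'=Q_{u_x,v_x}\cap Q_{wu_y,wv_y,y}$. Then for all $[f],[g]\in\mathrm{H}^*(W',k)$, $$\theta^*_{u_x,v_x,x}([f])\cup\theta^*_{wu_y,wv_y,y}([g])=\sum_{\substack{z\in Z\\(u'_z,v'_z)\in A_z}}\alpha_z\,\theta^*_{u'_z,v'_z,z}([f]\cup[g]).$$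
   Context: $G$ is a finite group, $k$ an algebraically closed field of characteristic $p$, $b$ a block idempotent of $kG$ with defect pointed group $P_\delta$, $i\in\delta$ a source idempotent; the source algebra $ikGi$ is a $k[P\times P]$-module via $(u,v)\cdot m=umv^{-1}$ and a $k\Delta P$-module by restriction to $\Delta P=\{(w,w)\mid w\in P\}$; cohomology with coefficients in $ikGi$ carries the cup product with respect to the multiplication of $ikGi$. Conjugation: ${}^xa=xax^{-1}$, $a^x=x^{-1}ax$. $Y_{G,b,P_\delta}$ is a subset of a system of representatives of $P\backslash G/P$ with a fixed isomorphism of $k[P\times P]$-modules $s:ikGi\to\bigoplus_{x\in Y_{G,b,P_\delta}}k[PxP]$. $Q_x:=\{(a,a^x)\mid a\in P\cap{}^xP\}$, $Q_{u,v,x}:=\Delta P\cap{}^{(u,v)}Q_x$; $[Q_x]$ is a fixed system of representatives of $\Delta P\backslash(P\times P)/Q_x$ and $Q_{u_x,v_x}:=Q_{u_x,v_x,x}$. $\theta_{u,v,x}:k\to ikGi$, $\alpha\mapsto\alpha s^{-1}(uxv^{-1})$, is a $kW$-module map for subgroups $W$ fixing $s^{-1}(uxv^{-1})$ (in particular for $W\le Q_{u,v,x}$), and $\theta^*_{u,v,x}:\mathrm{H}^*(W,k)\to\mathrm{H}^*(W,ikGi)$ is the induced map. *)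

theory Defs
  imports "HOL-Algebra.Group" "HOL-Computational_Algebra.Polynomial" "HOL-Library.Function_Algebras"
begin

definition alg_closed :: "'k::field itself \<Rightarrow> bool" where
  "alg_closed _ \<longleftrightarrow> (\<forall>q :: 'k poly. degree q > 0 \<longrightarrow> (\<exists>x. poly q x = 0))"

text \<open>Elements of kG are functions carrier G to k, extended by 0 outside the carrier.\<close>

definition galg :: "('g, 'b) monoid_scheme \<Rightarrow> ('g \<Rightarrow> 'k::field) set" where
  "galg G = {a. \<forall>g. g \<notin> carrier G \<longrightarrow> a g = 0}"

definition gmult :: "('g, 'b) monoid_scheme \<Rightarrow> ('g \<Rightarrow> 'k::field) \<Rightarrow> ('g \<Rightarrow> 'k) \<Rightarrow> ('g \<Rightarrow> 'k)" where
  "gmult G a c = (\<lambda>g. if g \<in> carrier G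
      then (\<Sum>h\<in>carrier G. a h * c (inv\<^bsub>G\<^esub> h \<otimes>\<^bsub>G\<^esub> g)) else 0)"

definition gbasis :: "'g \<Rightarrow> ('g \<Rightarrow> 'k::field)" where
  "gbasis g = (\<lambda>h. if h = g then 1 else 0)"

definition gcentre :: "('g, 'b) monoid_scheme \<Rightarrow> ('g \<Rightarrow> 'k::field) set" where
  "gcentre G = {a \<in> galg G. \<forall>c \<in> galg G. gmult G a c = gmult G c a}"

definition gfix :: "('g, 'b) monoid_scheme \<Rightarrow> 'g set \<Rightarrow> ('g \<Rightarrow> 'k::field) set" where
  "gfix G P = {a \<in> galg G. \<forall>u \<in> P. gmult G (gbasis u) a = gmult G a (gbasis u)}"

definition prim_idem :: "('g, 'b) monoid_scheme \<Rightarrow> ('g \<Rightarrow> 'k::field) set \<Rightarrow> ('g \<Rightarrow> 'k) \<Rightarrow> bool" where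
  "prim_idem G B e \<longleftrightarrow> e \<in> B \<and> e \<noteq> 0 \<and> gmult G e e = e \<and>
     (\<forall>e1 \<in> B. \<forall>e2 \<in> B. gmult G e1 e1 = e1 \<and> gmult G e2 e2 = e2 \<and>
        gmult G e1 e2 = 0 \<and> gmult G e2 e1 = 0 \<and> e = e1 + e2 \<longrightarrow> e1 = 0 \<or> e2 = 0)"

definition block_idem :: "('g, 'b) monoid_scheme \<Rightarrow> ('g \<Rightarrow> 'k::field) \<Rightarrow> bool" where
  "block_idem G b \<longleftrightarrow> prim_idem G (gcentre G) b"

definition centralizer_set :: "('g, 'b) monoid_scheme \<Rightarrow> 'g set \<Rightarrow> 'g set" where
  "centralizer_set G Q = {g \<in> carrier G. \<forall>u \<in> Q. g \<otimes>\<^bsub>G\<^esub> u = u \<otimes>\<^bsub>G\<^esub> g}"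

definition brauer :: "('g, 'b) monoid_scheme \<Rightarrow> 'g set \<Rightarrow> ('g \<Rightarrow> 'k::field) \<Rightarrow> ('g \<Rightarrow> 'k)" where
  "brauer G Q a = (\<lambda>g. if g \<in> centralizer_set G Q then a g else 0)"

definition p_subgroup :: "nat \<Rightarrow> 'g set \<Rightarrow> ('g, 'b) monoid_scheme \<Rightarrow> bool" where
  "p_subgroup p Q G \<longleftrightarrow> subgroup Q G \<and> (\<exists>n. card Q = p ^ n)"

definition defect_group :: "nat \<Rightarrow> ('g, 'b) monoid_scheme \<Rightarrow> ('g \<Rightarrow> 'k::field) \<Rightarrow> 'g set \<Rightarrow> bool" where
  "defect_group p G b P \<longleftrightarrow> p_subgroup p P G \<and> brauer G P b \<noteq> 0 \<and>
     (\<forall>Q. p_subgroup p Q G \<and> P \<subseteq> Q \<and> brauer G Q b \<noteq> 0 \<longrightarrow> Q = P)"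

text \<open>i is a source idempotent of b relative to the defect group P: i lies in a local
  point delta of P on kGb, i.e. i is primitive in (kGb)^P and Br_P(i) is nonzero
  (then P_delta is a defect pointed group of b).\<close>
definition source_idem :: "nat \<Rightarrow> ('g, 'b) monoid_scheme \<Rightarrow> ('g \<Rightarrow> 'k::field) \<Rightarrow> 'g set \<Rightarrow> ('g \<Rightarrow> 'k) \<Rightarrow> bool" where
  "source_idem p G b P i \<longleftrightarrow> defect_group p G b P \<and>
     prim_idem G {a \<in> gfix G P. gmult G a b = a} i \<and> brauer G P i \<noteq> 0"

definition source_alg :: "('g, 'b) monoid_scheme \<Rightarrow> ('g \<Rightarrow> 'k::field) \<Rightarrow> ('g \<Rightarrow> 'k) set" where
  "source_alg G i = {gmult G (gmult G i a) i | a. a \<in> galg G}"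

definition bimod_act :: "('g, 'b) monoid_scheme \<Rightarrow> 'g \<Rightarrow> 'g \<Rightarrow> ('g \<Rightarrow> 'k::field) \<Rightarrow> ('g \<Rightarrow> 'k)" where
  "bimod_act G u v m = gmult G (gmult G (gbasis u) m) (gbasis (inv\<^bsub>G\<^esub> v))"

definition dcoset :: "('g, 'b) monoid_scheme \<Rightarrow> 'g set \<Rightarrow> 'g \<Rightarrow> 'g set" where
  "dcoset G P x = {u \<otimes>\<^bsub>G\<^esub> x \<otimes>\<^bsub>G\<^esub> v | u v. u \<in> P \<and> v \<in> P}"

definition dcoset_reps_subset :: "('g, 'b) monoid_scheme \<Rightarrow> 'g set \<Rightarrow> 'g set \<Rightarrow> bool" where
  "dcoset_reps_subset G P Y \<longleftrightarrow> Y \<subseteq> carrier G \<and>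
     (\<forall>x \<in> Y. \<forall>y \<in> Y. dcoset G P x = dcoset G P y \<longrightarrow> x = y)"

text \<open>The permutation module (direct sum over x in Y of k[PxP]) realised inside kG.\<close>
definition perm_mod :: "('g, 'b) monoid_scheme \<Rightarrow> 'g set \<Rightarrow> 'g set \<Rightarrow> ('g \<Rightarrow> 'k::field) set" where
  "perm_mod G P Y = {f. \<forall>g. f g \<noteq> 0 \<longrightarrow> g \<in> (\<Union>x\<in>Y. dcoset G P x)}"

definition source_iso ::
  "('g, 'b) monoid_scheme \<Rightarrow> 'g set \<Rightarrow> ('g \<Rightarrow> 'k::field) \<Rightarrow> 'g set \<Rightarrow> (('g \<Rightarrow> 'k) \<Rightarrow> ('g \<Rightarrow> 'k)) \<Rightarrow> bool" where
  "source_iso G P i Y s \<longleftrightarrow> bij_betw s (source_alg G i) (perm_mod G P Y) \<and>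
     (\<forall>m \<in> source_alg G i. \<forall>m' \<in> source_alg G i. s (m + m') = s m + s m') \<and>
     (\<forall>m \<in> source_alg G i. \<forall>c. s (\<lambda>g. c * m g) = (\<lambda>g. c * s m g)) \<and>
     (\<forall>u \<in> P. \<forall>v \<in> P. \<forall>m \<in> source_alg G i. s (bimod_act G u v m) = bimod_act G u v (s m))"

definition sinv :: "('g, 'b) monoid_scheme \<Rightarrow> ('g \<Rightarrow> 'k::field) \<Rightarrow> (('g \<Rightarrow> 'k) \<Rightarrow> ('g \<Rightarrow> 'k)) \<Rightarrow> 'g \<Rightarrow> ('g \<Rightarrow> 'k)" where
  "sinv G i s g = inv_into (source_alg G i) s (gbasis g)"

definition Qx :: "('g, 'b) monoid_scheme \<Rightarrow> 'g set \<Rightarrow> 'g \<Rightarrow> ('g \<times> 'g) set" where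
  "Qx G P x = {(a, inv\<^bsub>G\<^esub> x \<otimes>\<^bsub>G\<^esub> a \<otimes>\<^bsub>G\<^esub> x) | a.
                 a \<in> P \<and> inv\<^bsub>G\<^esub> x \<otimes>\<^bsub>G\<^esub> a \<otimes>\<^bsub>G\<^esub> x \<in> P}"

text \<open>Q_{u,v,x} = Delta P \<inter> (u,v)Q_x, with Delta P identified with P.\<close>
definition Quvx :: "('g, 'b) monoid_scheme \<Rightarrow> 'g set \<Rightarrow> 'g \<Rightarrow> 'g \<Rightarrow> 'g \<Rightarrow> 'g set" where
  "Quvx G P u v x = {w \<in> P. \<exists>(a, c) \<in> Qx G P x.
      w = u \<otimes>\<^bsub>G\<^esub> a \<otimes>\<^bsub>G\<^esub> inv\<^bsub>G\<^esub> u \<and> w = v \<otimes>\<^bsub>G\<^esub> c \<otimes>\<^bsub>G\<^esub> inv\<^bsub>G\<^esub> v}"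

text \<open>R is a system of representatives of Delta P \ (P x P) / Q_x.\<close>
definition Qx_reps :: "('g, 'b) monoid_scheme \<Rightarrow> 'g set \<Rightarrow> 'g \<Rightarrow> ('g \<times> 'g) set \<Rightarrow> bool" where
  "Qx_reps G P x R \<longleftrightarrow> R \<subseteq> P \<times> P \<and>
     (\<forall>a \<in> P. \<forall>c \<in> P. \<exists>!r. r \<in> R \<and> (\<exists>w \<in> P. \<exists>(q1, q2) \<in> Qx G P x.
         a = w \<otimes>\<^bsub>G\<^esub> fst r \<otimes>\<^bsub>G\<^esub> q1 \<and> c = w \<otimes>\<^bsub>G\<^esub> snd r \<otimes>\<^bsub>G\<^esub> q2))"

text \<open>An n-cochain on W with values in an abelian group is a function on lists of length n
  (entries in W). act is the action of W on the coefficients.\<close>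

definition gprod :: "('g, 'b) monoid_scheme \<Rightarrow> 'g list \<Rightarrow> 'g" where
  "gprod G ws = foldr (\<lambda>a c. a \<otimes>\<^bsub>G\<^esub> c) ws \<one>\<^bsub>G\<^esub>"

definition sgn_nat :: "nat \<Rightarrow> 'v::ab_group_add \<Rightarrow> 'v" where
  "sgn_nat j x = (if even j then x else - x)"

definition cobound :: "('g, 'b) monoid_scheme \<Rightarrow> ('g \<Rightarrow> 'v \<Rightarrow> 'v) \<Rightarrow> nat \<Rightarrow> ('g list \<Rightarrow> 'v::ab_group_add) \<Rightarrow> 'g list \<Rightarrow> 'v" where
  "cobound G act n f ws =
     act (ws ! 0) (f (drop 1 ws))
     + (\<Sum>j\<in>{1..n}. sgn_nat j (f (take (j - 1) ws @ [ws ! (j - 1) \<otimes>\<^bsub>G\<^esub> ws ! j] @ drop (j + 1) ws)))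
     + sgn_nat (n + 1) (f (take n ws))"

definition cochain_dom :: "'g set \<Rightarrow> nat \<Rightarrow> 'g list set" where
  "cochain_dom W n = {ws. length ws = n \<and> set ws \<subseteq> W}"

definition is_cocycle :: "('g, 'b) monoid_scheme \<Rightarrow> 'g set \<Rightarrow> ('g \<Rightarrow> 'v \<Rightarrow> 'v) \<Rightarrow> nat \<Rightarrow> ('g list \<Rightarrow> 'v::ab_group_add) \<Rightarrow> bool" where
  "is_cocycle G W act n f \<longleftrightarrow> (\<forall>ws \<in> cochain_dom W (n + 1). cobound G act n f ws = 0)"

definition is_coboundary :: "('g, 'b) monoid_scheme \<Rightarrow> 'g set \<Rightarrow> 'v set \<Rightarrow> ('g \<Rightarrow> 'v \<Rightarrow> 'v) \<Rightarrow> nat \<Rightarrow> ('g list \<Rightarrow> 'v::ab_group_add) \<Rightarrow> bool" where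
  "is_coboundary G W M act n c \<longleftrightarrow>
     (if n = 0 then (\<forall>ws \<in> cochain_dom W 0. c ws = 0)
      else (\<exists>h. (\<forall>ws \<in> cochain_dom W (n - 1). h ws \<in> M) \<and>
                (\<forall>ws \<in> cochain_dom W n. c ws = cobound G act (n - 1) h ws)))"

definition triv_act :: "'g \<Rightarrow> 'k \<Rightarrow> 'k" where
  "triv_act _ c = c"

definition conj_act :: "('g, 'b) monoid_scheme \<Rightarrow> 'g \<Rightarrow> ('g \<Rightarrow> 'k::field) \<Rightarrow> ('g \<Rightarrow> 'k)" where
  "conj_act G w m = bimod_act G w w m"

definition cup_k :: "nat \<Rightarrow> ('g list \<Rightarrow> 'k::field) \<Rightarrow> ('g list \<Rightarrow> 'k) \<Rightarrow> 'g list \<Rightarrow> 'k" where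
  "cup_k m f g ws = f (take m ws) * g (drop m ws)"

definition cup_A :: "('g, 'b) monoid_scheme \<Rightarrow> nat \<Rightarrow> ('g list \<Rightarrow> ('g \<Rightarrow> 'k::field)) \<Rightarrow> ('g list \<Rightarrow> ('g \<Rightarrow> 'k)) \<Rightarrow> 'g list \<Rightarrow> ('g \<Rightarrow> 'k)" where
  "cup_A G m f g ws = gmult G (f (take m ws)) (conj_act G (gprod G (take m ws)) (g (drop m ws)))"

text \<open>theta^*_{u,v,x} on cochains: induced by k \<rightarrow> ikGi, alpha maps to alpha s^{-1}(u x v^{-1}).\<close>
definition theta :: "('g, 'b) monoid_scheme \<Rightarrow> ('g \<Rightarrow> 'k::field) \<Rightarrow> (('g \<Rightarrow> 'k) \<Rightarrow> ('g \<Rightarrow> 'k))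
     \<Rightarrow> 'g \<Rightarrow> 'g \<Rightarrow> 'g \<Rightarrow> ('g list \<Rightarrow> 'k) \<Rightarrow> 'g list \<Rightarrow> ('g \<Rightarrow> 'k)" where
  "theta G i s u v x f ws = (\<lambda>h. f ws * sinv G i s (u \<otimes>\<^bsub>G\<^esub> x \<otimes>\<^bsub>G\<^esub> inv\<^bsub>G\<^esub> v) h)"

text \<open>Cup product on H^*(W,k) and H^*(W,ikGi) in total degree n, for graded families of cochains.\<close>
definition gcup_k :: "nat \<Rightarrow> (nat \<Rightarrow> 'g list \<Rightarrow> 'k::field) \<Rightarrow> (nat \<Rightarrow> 'g list \<Rightarrow> 'k) \<Rightarrow> 'g list \<Rightarrow> 'k" where
  "gcup_k n F H ws = (\<Sum>m\<le>n. cup_k m (F m) (H (n - m)) ws)"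

definition gcup_A :: "('g, 'b) monoid_scheme \<Rightarrow> nat \<Rightarrow> (nat \<Rightarrow> 'g list \<Rightarrow> ('g \<Rightarrow> 'k::field))
     \<Rightarrow> (nat \<Rightarrow> 'g list \<Rightarrow> ('g \<Rightarrow> 'k)) \<Rightarrow> 'g list \<Rightarrow> ('g \<Rightarrow> 'k)" where
  "gcup_A G n F H ws = (\<Sum>m\<le>n. cup_A G m (F m) (H (n - m)) ws)"

definition graded_class_k :: "('g, 'b) monoid_scheme \<Rightarrow> 'g set \<Rightarrow> (nat \<Rightarrow> 'g list \<Rightarrow> 'k::field) \<Rightarrow> bool" where
  "graded_class_k G W F \<longleftrightarrow> (\<forall>m. is_cocycle G W triv_act m (F m)) \<and>
     (\<exists>N. \<forall>m \<ge> N. \<forall>ws \<in> cochain_dom W m. F m ws = 0)"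

end

theory Submission
  imports Defs
begin


lemma sum_app: "(\<Sum>x\<in>A. f x) h = (\<Sum>x\<in>A. f x h)"
  by (induction A rule: infinite_finite_induct) auto

lemma gmult_galg: "gmult G a c \<in> galg G"
  by (simp add: galg_def gmult_def)

lemma gmult_scal: "gmult G (\<lambda>h. a * X h) (\<lambda>h. c * Y h) = (\<lambda>h. a * c * gmult G X Y h)"
  by (rule ext) (simp add: gmult_def sum_distrib_left mult_ac)

definition cj :: "('g, 'b) monoid_scheme \<Rightarrow> 'g \<Rightarrow> ('g \<Rightarrow> 'k::field) \<Rightarrow> ('g \<Rightarrow> 'k)" where
  "cj G t X = (\<lambda>g. if g \<in> carrier G then X (inv\<^bsub>G\<^esub> t \<otimes>\<^bsub>G\<^esub> g \<otimes>\<^bsub>G\<^esub> t) else 0)"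

lemma gmult_basis_left:
  assumes "group G" "u \<in> carrier G" and fin: "finite (carrier G)"
  shows "gmult G (gbasis u) X = (\<lambda>g. if g \<in> carrier G then X (inv\<^bsub>G\<^esub> u \<otimes>\<^bsub>G\<^esub> g) else 0)"
proof (rule ext)
  fix g show "gmult G (gbasis u) X g = (if g \<in> carrier G then X (inv\<^bsub>G\<^esub> u \<otimes>\<^bsub>G\<^esub> g) else 0)"
  proof (cases "g \<in> carrier G")
    case True
    have "(\<Sum>h\<in>carrier G. gbasis u h * X (inv\<^bsub>G\<^esub> h \<otimes>\<^bsub>G\<^esub> g)) = (\<Sum>h\<in>carrier G. if h = u then X (inv\<^bsub>G\<^esub> h \<otimes>\<^bsub>G\<^esub> g) else 0)"
      by (rule sum.cong) (auto simp: gbasis_def)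
    also have "\<dots> = X (inv\<^bsub>G\<^esub> u \<otimes>\<^bsub>G\<^esub> g)" using assms(2) fin by (simp add: sum.delta')
    finally show ?thesis using True by (simp add: gmult_def)
  qed (simp add: gmult_def)
qed

lemma gmult_basis_right:
  assumes "group G" "v \<in> carrier G" and fin: "finite (carrier G)"
  shows "gmult G X (gbasis v) = (\<lambda>g. if g \<in> carrier G then X (g \<otimes>\<^bsub>G\<^esub> inv\<^bsub>G\<^esub> v) else 0)"
proof (rule ext)
  fix g
  interpret group G by fact
  show "gmult G X (gbasis v) g = (if g \<in> carrier G then X (g \<otimes>\<^bsub>G\<^esub> inv\<^bsub>G\<^esub> v) else 0)"
  proof (cases "g \<in> carrier G")
    case True
    have "(\<Sum>h\<in>carrier G. X h * gbasis v (inv\<^bsub>G\<^esub> h \<otimes>\<^bsub>G\<^esub> g)) = (\<Sum>h\<in>carrier G. if h = g \<otimes>\<^bsub>G\<^esub> inv\<^bsub>G\<^esub> v then X h else 0)"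
    proof (rule sum.cong[OF refl])
      fix h assume h: "h \<in> carrier G"
      have "(inv\<^bsub>G\<^esub> h \<otimes>\<^bsub>G\<^esub> g = v) \<longleftrightarrow> (h = g \<otimes>\<^bsub>G\<^esub> inv\<^bsub>G\<^esub> v)"
        using h True assms(2)
        by (metis inv_closed inv_inv m_assoc m_closed r_inv r_one l_inv l_one)
      thus "X h * gbasis v (inv\<^bsub>G\<^esub> h \<otimes>\<^bsub>G\<^esub> g) = (if h = g \<otimes>\<^bsub>G\<^esub> inv\<^bsub>G\<^esub> v then X h else 0)"
        by (auto simp: gbasis_def)
    qed
    also have "\<dots> = X (g \<otimes>\<^bsub>G\<^esub> inv\<^bsub>G\<^esub> v)" using True assms(2) fin by (simp add: sum.delta')
    finally show ?thesis using True by (simp add: gmult_def)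
  qed (simp add: gmult_def)
qed

lemma grp_cancel1: "group G \<Longrightarrow> t \<in> carrier G \<Longrightarrow> z \<in> carrier G \<Longrightarrow> t \<otimes>\<^bsub>G\<^esub> (inv\<^bsub>G\<^esub> t \<otimes>\<^bsub>G\<^esub> z) = z"
  by (metis group.inv_closed group.is_monoid group.r_inv monoid.l_one monoid.m_assoc)
lemma grp_cancel2: "group G \<Longrightarrow> t \<in> carrier G \<Longrightarrow> z \<in> carrier G \<Longrightarrow> inv\<^bsub>G\<^esub> t \<otimes>\<^bsub>G\<^esub> (t \<otimes>\<^bsub>G\<^esub> z) = z"
  by (metis group.inv_closed group.is_monoid group.l_inv monoid.l_one monoid.m_assoc)

lemma bimod_cj:
  assumes gr: "group G" and t: "t \<in> carrier G" and fin: "finite (carrier G)"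
  shows "bimod_act G t t X = cj G t X"
proof -
  interpret group G by fact
  have ii: "inv\<^bsub>G\<^esub> (inv\<^bsub>G\<^esub> t) = t" using t by simp
  show ?thesis
    unfolding bimod_act_def cj_def
    using t fin gr ii apply (simp add: gmult_basis_left gmult_basis_right m_assoc group.inv_inv)
    apply (simp only: ii)
    apply (rule ext)
    apply (auto simp: m_assoc)
    done
qed

lemma cj_mult:
  assumes gr: "group G" and t: "t \<in> carrier G"
  shows "cj G t (gmult G X Y) = gmult G (cj G t X) (cj G t Y)"
proof (rule ext)
  interpret group G by fact
  fix g
  show "cj G t (gmult G X Y) g = gmult G (cj G t X) (cj G t Y) g"
  proof (cases "g \<in> carrier G")
    case True
    let ?f = "\<lambda>h. inv\<^bsub>G\<^esub> t \<otimes>\<^bsub>G\<^esub> h \<otimes>\<^bsub>G\<^esub> t"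
    have bij: "bij_betw ?f (carrier G) (carrier G)"
    proof (rule bij_betwI[where g = "\<lambda>h. t \<otimes>\<^bsub>G\<^esub> h \<otimes>\<^bsub>G\<^esub> inv\<^bsub>G\<^esub> t"])
      show "?f \<in> carrier G \<rightarrow> carrier G" using t by auto
      show "(\<lambda>h. t \<otimes>\<^bsub>G\<^esub> h \<otimes>\<^bsub>G\<^esub> inv\<^bsub>G\<^esub> t) \<in> carrier G \<rightarrow> carrier G" using t by auto
      fix h assume h: "h \<in> carrier G"
      show "t \<otimes>\<^bsub>G\<^esub> ?f h \<otimes>\<^bsub>G\<^esub> inv\<^bsub>G\<^esub> t = h" using t h
        by (simp add: m_assoc[symmetric]) (simp add: m_assoc)
      show "?f (t \<otimes>\<^bsub>G\<^esub> h \<otimes>\<^bsub>G\<^esub> inv\<^bsub>G\<^esub> t) = h" using t h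
        by (simp add: m_assoc[symmetric]) (simp add: m_assoc)
    qed
    have "gmult G (cj G t X) (cj G t Y) g
        = (\<Sum>h\<in>carrier G. X (?f h) * Y (inv\<^bsub>G\<^esub> (?f h) \<otimes>\<^bsub>G\<^esub> ?f g))"
      unfolding gmult_def cj_def using True t
      apply simp
      apply (rule sum.cong[OF refl])
      apply (simp add: inv_mult_group m_assoc grp_cancel1[OF gr])
      done
    also have "\<dots> = (\<Sum>h\<in>carrier G. X h * Y (inv\<^bsub>G\<^esub> h \<otimes>\<^bsub>G\<^esub> ?f g))"
      using sum.reindex_bij_betw[OF bij, of "\<lambda>h. X h * Y (inv\<^bsub>G\<^esub> h \<otimes>\<^bsub>G\<^esub> ?f g)"] by simp
    also have "\<dots> = cj G t (gmult G X Y) g"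
      unfolding gmult_def cj_def using True t by simp
    finally show ?thesis by simp
  qed (simp add: gmult_def cj_def)
qed

lemma cj_galg: "cj G t a \<in> galg G"
  by (simp add: cj_def galg_def)

lemma cj_scal: "cj G t (\<lambda>h. c * Y h) = (\<lambda>h. c * cj G t Y h)"
  by (rule ext) (simp add: cj_def)

lemma cj_fix_i:
  assumes gr: "group G" and t: "t \<in> carrier G" and fin: "finite (carrier G)"
    and ig: "i \<in> galg G" and comm: "gmult G (gbasis t) i = gmult G i (gbasis t)"
  shows "cj G t i = i"
proof (rule ext)
  interpret group G by fact
  fix g
  show "cj G t i g = i g"
  proof (cases "g \<in> carrier G")
    case True
    have "gmult G (gbasis t) i (g \<otimes>\<^bsub>G\<^esub> t) = gmult G i (gbasis t) (g \<otimes>\<^bsub>G\<^esub> t)" using comm by simp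
    hence "i (inv\<^bsub>G\<^esub> t \<otimes>\<^bsub>G\<^esub> (g \<otimes>\<^bsub>G\<^esub> t)) = i (g \<otimes>\<^bsub>G\<^esub> t \<otimes>\<^bsub>G\<^esub> inv\<^bsub>G\<^esub> t)"
      using True t fin by (simp add: gmult_basis_left[OF gr t fin] gmult_basis_right[OF gr t fin])
    thus ?thesis using True t by (simp add: cj_def m_assoc)
  next
    case False thus ?thesis using ig by (simp add: cj_def galg_def)
  qed
qed

lemma cj_basis:
  assumes gr: "group G" and t: "t \<in> carrier G" and g0: "g0 \<in> carrier G"
  shows "cj G t (gbasis g0) = gbasis (t \<otimes>\<^bsub>G\<^esub> g0 \<otimes>\<^bsub>G\<^esub> inv\<^bsub>G\<^esub> t)"
proof (rule ext)
  interpret group G by fact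
  fix g
  show "cj G t (gbasis g0) g = gbasis (t \<otimes>\<^bsub>G\<^esub> g0 \<otimes>\<^bsub>G\<^esub> inv\<^bsub>G\<^esub> t) g"
  proof (cases "g \<in> carrier G")
    case True
    have "(inv\<^bsub>G\<^esub> t \<otimes>\<^bsub>G\<^esub> g \<otimes>\<^bsub>G\<^esub> t = g0) \<longleftrightarrow> (g = t \<otimes>\<^bsub>G\<^esub> g0 \<otimes>\<^bsub>G\<^esub> inv\<^bsub>G\<^esub> t)"
    proof
      assume "inv\<^bsub>G\<^esub> t \<otimes>\<^bsub>G\<^esub> g \<otimes>\<^bsub>G\<^esub> t = g0"
      thus "g = t \<otimes>\<^bsub>G\<^esub> g0 \<otimes>\<^bsub>G\<^esub> inv\<^bsub>G\<^esub> t" using True t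
        by (auto simp: m_assoc grp_cancel1[OF gr])
    next
      assume "g = t \<otimes>\<^bsub>G\<^esub> g0 \<otimes>\<^bsub>G\<^esub> inv\<^bsub>G\<^esub> t"
      thus "inv\<^bsub>G\<^esub> t \<otimes>\<^bsub>G\<^esub> g \<otimes>\<^bsub>G\<^esub> t = g0" using g0 t
        by (auto simp: m_assoc grp_cancel2[OF gr])
    qed
    thus ?thesis using True by (simp add: cj_def gbasis_def)
  next
    case False
    thus ?thesis using t g0 by (auto simp: cj_def gbasis_def)
  qed
qed

lemma conj_fix:
  fixes i :: "'g \<Rightarrow> 'k::field"
  assumes gr: "group G" and fin: "finite (carrier G)"
    and ifix: "i \<in> gfix G P" and PG: "P \<subseteq> carrier G"
    and iso: "source_iso G P i Y s" and tP: "t \<in> P"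
    and g0: "g0 \<in> carrier G" and pm: "(gbasis g0 :: 'g \<Rightarrow> 'k) \<in> perm_mod G P Y"
    and cm: "t \<otimes>\<^bsub>G\<^esub> g0 = g0 \<otimes>\<^bsub>G\<^esub> t"
  shows "conj_act G t (sinv G i s g0) = sinv G i s g0"
proof -
  interpret group G by fact
  have t: "t \<in> carrier G" using tP PG by auto
  have bij: "bij_betw s (source_alg G i) (perm_mod G P Y)" using iso by (simp add: source_iso_def)
  have sur: "gbasis g0 \<in> s ` source_alg G i" using bij pm by (simp add: bij_betw_def)
  define m where "m = sinv G i s g0"
  have mS: "m \<in> source_alg G i" unfolding m_def sinv_def using sur by (rule inv_into_into)
  have sm: "s m = gbasis g0" unfolding m_def sinv_def using sur by (rule f_inv_into_f)
  obtain a where a: "a \<in> galg G" and mdef: "m = gmult G (gmult G i a) i"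
    using mS by (auto simp: source_alg_def)
  have ig: "i \<in> galg G" and icomm: "gmult G (gbasis t) i = gmult G i (gbasis t)"
    using ifix tP by (auto simp: gfix_def)
  have cji: "cj G t i = i" by (rule cj_fix_i[OF gr t fin ig icomm])
  have bm: "bimod_act G t t m = cj G t m" by (rule bimod_cj[OF gr t fin])
  have "cj G t m = gmult G (gmult G i (cj G t a)) i"
    unfolding mdef by (simp add: cj_mult[OF gr t] cji)
  hence bS: "bimod_act G t t m \<in> source_alg G i"
    using bm cj_galg[of G t a] by (auto simp: source_alg_def)
  have "s (bimod_act G t t m) = bimod_act G t t (s m)"
    using iso tP mS by (simp add: source_iso_def)
  also have "\<dots> = gbasis (t \<otimes>\<^bsub>G\<^esub> g0 \<otimes>\<^bsub>G\<^esub> inv\<^bsub>G\<^esub> t)"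
    unfolding bimod_cj[OF gr t fin] sm by (rule cj_basis[OF gr t g0])
  also have "t \<otimes>\<^bsub>G\<^esub> g0 \<otimes>\<^bsub>G\<^esub> inv\<^bsub>G\<^esub> t = g0"
    using cm t g0 by (simp add: m_assoc)
  finally have "s (bimod_act G t t m) = s m" using sm by simp
  hence "bimod_act G t t m = m"
    using bij bS mS by (auto simp: bij_betw_def inj_on_def)
  thus ?thesis by (simp add: conj_act_def m_def)
qed

lemma quv_comm:
  fixes G (structure)
  assumes gr: "group G" and PG: "P \<subseteq> carrier G" and u: "u \<in> carrier G" and v: "v \<in> carrier G"
    and y: "y \<in> carrier G" and t: "t \<in> Quvx G P u v y"
  shows "t \<in> P \<and> t \<otimes>\<^bsub>G\<^esub> (u \<otimes>\<^bsub>G\<^esub> y \<otimes>\<^bsub>G\<^esub> inv\<^bsub>G\<^esub> v) = (u \<otimes>\<^bsub>G\<^esub> y \<otimes>\<^bsub>G\<^esub> inv\<^bsub>G\<^esub> v) \<otimes>\<^bsub>G\<^esub> t"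
proof -
  interpret group G by fact
  obtain a where tP: "t \<in> P" and aP: "a \<in> P" and cP: "inv y \<otimes> a \<otimes> y \<in> P"
    and t1: "t = u \<otimes> a \<otimes> inv u" and t2: "t = v \<otimes> (inv y \<otimes> a \<otimes> y) \<otimes> inv v"
    using t unfolding Quvx_def Qx_def by blast
  have a: "a \<in> carrier G" using aP PG by auto
  have "t \<otimes> (u \<otimes> y \<otimes> inv v) = u \<otimes> a \<otimes> y \<otimes> inv v"
    unfolding t1 using a u v y by (simp add: m_assoc grp_cancel2[OF gr])
  also have "\<dots> = (u \<otimes> y \<otimes> inv v) \<otimes> t"
    unfolding t2 using a u v y by (simp add: m_assoc grp_cancel2[OF gr] grp_cancel1[OF gr])
  finally show ?thesis using tP by simp
qed

lemma gprod_comm: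
  fixes G (structure)
  assumes gr: "group G" and sg: "subgroup P G" and g0: "g0 \<in> carrier G"
    and W: "\<forall>t \<in> W. t \<in> P \<and> t \<otimes>\<^bsub>G\<^esub> g0 = g0 \<otimes>\<^bsub>G\<^esub> t"
  shows "set ws \<subseteq> W \<Longrightarrow> gprod G ws \<in> P \<and> gprod G ws \<otimes>\<^bsub>G\<^esub> g0 = g0 \<otimes>\<^bsub>G\<^esub> gprod G ws"
proof (induction ws)
  interpret group G by fact
  case Nil
  then show ?case using sg g0 by (simp add: gprod_def subgroup.one_closed)
next
  interpret group G by fact
  case (Cons a ws)
  have PG: "P \<subseteq> carrier G" using sg by (rule subgroup.subset)
  have aW: "a \<in> P" "a \<otimes> g0 = g0 \<otimes> a" using Cons W by auto
  have ih: "gprod G ws \<in> P" "gprod G ws \<otimes> g0 = g0 \<otimes> gprod G ws" using Cons by auto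
  have gp: "gprod G (a # ws) = a \<otimes> gprod G ws" by (simp add: gprod_def)
  have ac: "a \<in> carrier G" "gprod G ws \<in> carrier G" using aW ih PG by auto
  have "a \<otimes> gprod G ws \<otimes> g0 = a \<otimes> g0 \<otimes> gprod G ws" using ih ac g0 by (simp add: m_assoc)
  also have "\<dots> = g0 \<otimes> (a \<otimes> gprod G ws)" using aW ac g0 by (simp add: m_assoc)
  finally show ?case using gp aW ih sg by (simp add: subgroup.m_closed)
qed


theorem lemma4p8:
  fixes G :: "('g, 'b) monoid_scheme" and p :: nat
    and b i :: "'g \<Rightarrow> 'k::field" and P Y :: "'g set"
    and s :: "('g \<Rightarrow> 'k) \<Rightarrow> ('g \<Rightarrow> 'k)"
    and R :: "'g \<Rightarrow> ('g \<times> 'g) set"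
    and x y ux vx uy vy w :: 'g
    and Z :: "'g set" and A :: "'g \<Rightarrow> ('g \<times> 'g) set" and \<alpha> :: "'g \<Rightarrow> 'k"
    and F H :: "nat \<Rightarrow> 'g list \<Rightarrow> 'k"
  assumes "group G" and "finite (carrier G)"
    and "alg_closed TYPE('k)" and "prime p" and "CHAR('k) = p"
    and "block_idem G b"
    and "source_idem p G b P i"
    and "dcoset_reps_subset G P Y"
    and "source_iso G P i Y s"
    and "\<forall>t \<in> Y. Qx_reps G P t (R t)"
    and "x \<in> Y" and "y \<in> Y"
    and "(ux, vx) \<in> R x" and "(uy, vy) \<in> R y"
    and "w \<in> P"
    and "Z \<subseteq> Y" and "finite Z" and "\<forall>z \<in> Z. A z \<subseteq> P \<times> P"
    and "gmult G (sinv G i s (ux \<otimes>\<^bsub>G\<^esub> x \<otimes>\<^bsub>G\<^esub> inv\<^bsub>G\<^esub> vx))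
                 (sinv G i s (w \<otimes>\<^bsub>G\<^esub> uy \<otimes>\<^bsub>G\<^esub> y \<otimes>\<^bsub>G\<^esub> inv\<^bsub>G\<^esub> vy \<otimes>\<^bsub>G\<^esub> inv\<^bsub>G\<^esub> w))
         = (\<Sum>z\<in>Z. \<Sum>(u', v')\<in>A z. (\<lambda>h. \<alpha> z * sinv G i s (u' \<otimes>\<^bsub>G\<^esub> z \<otimes>\<^bsub>G\<^esub> inv\<^bsub>G\<^esub> v') h))"
    and "graded_class_k G (Quvx G P ux vx x \<inter> Quvx G P (w \<otimes>\<^bsub>G\<^esub> uy) (w \<otimes>\<^bsub>G\<^esub> vy) y) F"
    and "graded_class_k G (Quvx G P ux vx x \<inter> Quvx G P (w \<otimes>\<^bsub>G\<^esub> uy) (w \<otimes>\<^bsub>G\<^esub> vy) y) H"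
  shows "\<forall>n. is_coboundary G (Quvx G P ux vx x \<inter> Quvx G P (w \<otimes>\<^bsub>G\<^esub> uy) (w \<otimes>\<^bsub>G\<^esub> vy) y)
            (source_alg G i) (conj_act G) n
            (\<lambda>ws. gcup_A G n (\<lambda>m. theta G i s ux vx x (F m))
                              (\<lambda>m. theta G i s (w \<otimes>\<^bsub>G\<^esub> uy) (w \<otimes>\<^bsub>G\<^esub> vy) y (H m)) ws
                - (\<Sum>z\<in>Z. \<Sum>(u', v')\<in>A z.
                     (\<lambda>h. \<alpha> z * theta G i s u' v' z (gcup_k n F H) ws h)))"
proof -
  let ?W = "Quvx G P ux vx x \<inter> Quvx G P (w \<otimes>\<^bsub>G\<^esub> uy) (w \<otimes>\<^bsub>G\<^esub> vy) y"
  have gr: "group G" and fin: "finite (carrier G)" using assms by auto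
  interpret group G by fact
  have sg: "subgroup P G" using assms(7)
    by (simp add: source_idem_def defect_group_def p_subgroup_def)
  have PG: "P \<subseteq> carrier G" using sg by (rule subgroup.subset)
  have ifix: "i \<in> gfix G P" using assms(7) by (simp add: source_idem_def prim_idem_def)
  have iso: "source_iso G P i Y s" by fact
  have Ry: "R y \<subseteq> P \<times> P" using assms(10,12) by (simp add: Qx_reps_def)
  have uvy: "uy \<in> P" "vy \<in> P" using Ry assms(14) by auto
  have yc: "y \<in> carrier G" using assms(8,12) by (auto simp: dcoset_reps_subset_def)
  have wc: "w \<in> carrier G" using assms(15) PG by auto
  have uyc: "uy \<in> carrier G" "vy \<in> carrier G" using uvy PG by auto
  define g0 where "g0 = w \<otimes>\<^bsub>G\<^esub> uy \<otimes>\<^bsub>G\<^esub> y \<otimes>\<^bsub>G\<^esub> inv\<^bsub>G\<^esub> vy \<otimes>\<^bsub>G\<^esub> inv\<^bsub>G\<^esub> w"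
  have g0c: "g0 \<in> carrier G" unfolding g0_def using wc uyc yc by simp
  have g0eq: "w \<otimes>\<^bsub>G\<^esub> uy \<otimes>\<^bsub>G\<^esub> y \<otimes>\<^bsub>G\<^esub> inv\<^bsub>G\<^esub> (w \<otimes>\<^bsub>G\<^esub> vy) = g0"
    unfolding g0_def using wc uyc yc by (simp add: inv_mult_group m_assoc)
  have g0d: "g0 \<in> dcoset G P y"
  proof -
    have "g0 = (w \<otimes>\<^bsub>G\<^esub> uy) \<otimes>\<^bsub>G\<^esub> y \<otimes>\<^bsub>G\<^esub> (inv\<^bsub>G\<^esub> vy \<otimes>\<^bsub>G\<^esub> inv\<^bsub>G\<^esub> w)"
      unfolding g0_def using wc uyc yc by (simp add: m_assoc)
    moreover have "w \<otimes>\<^bsub>G\<^esub> uy \<in> P" "inv\<^bsub>G\<^esub> vy \<otimes>\<^bsub>G\<^esub> inv\<^bsub>G\<^esub> w \<in> P"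
      using sg uvy assms(15) by (auto simp: subgroup.m_closed subgroup.m_inv_closed)
    ultimately show ?thesis unfolding dcoset_def by blast
  qed
  have pm: "(gbasis g0 :: 'g \<Rightarrow> 'k) \<in> perm_mod G P Y"
    using g0d assms(12) by (auto simp: perm_mod_def gbasis_def split: if_splits)
  have Wcomm: "\<forall>t \<in> ?W. t \<in> P \<and> t \<otimes>\<^bsub>G\<^esub> g0 = g0 \<otimes>\<^bsub>G\<^esub> t"
  proof
    fix t assume "t \<in> ?W"
    hence "t \<in> Quvx G P (w \<otimes>\<^bsub>G\<^esub> uy) (w \<otimes>\<^bsub>G\<^esub> vy) y" by simp
    from quv_comm[OF gr PG _ _ yc this] wc uyc
    show "t \<in> P \<and> t \<otimes>\<^bsub>G\<^esub> g0 = g0 \<otimes>\<^bsub>G\<^esub> t" unfolding g0eq by simp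
  qed
  define X where "X = sinv G i s (ux \<otimes>\<^bsub>G\<^esub> x \<otimes>\<^bsub>G\<^esub> inv\<^bsub>G\<^esub> vx)"
  define Yv where "Yv = sinv G i s g0"
  define S where "S = (\<Sum>z\<in>Z. \<Sum>(u', v')\<in>A z. (\<lambda>h. \<alpha> z * sinv G i s (u' \<otimes>\<^bsub>G\<^esub> z \<otimes>\<^bsub>G\<^esub> inv\<^bsub>G\<^esub> v') h))"
  have XY: "gmult G X Yv = S" using assms(19) unfolding X_def Yv_def S_def g0_def .
  have key: "gcup_A G n (\<lambda>m. theta G i s ux vx x (F m))
                              (\<lambda>m. theta G i s (w \<otimes>\<^bsub>G\<^esub> uy) (w \<otimes>\<^bsub>G\<^esub> vy) y (H m)) ws
                - (\<Sum>z\<in>Z. \<Sum>(u', v')\<in>A z.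
                     (\<lambda>h. \<alpha> z * theta G i s u' v' z (gcup_k n F H) ws h)) = 0"
    if ws: "ws \<in> cochain_dom ?W n" for n ws
  proof -
    have cup: "cup_A G m (theta G i s ux vx x (F m)) (theta G i s (w \<otimes>\<^bsub>G\<^esub> uy) (w \<otimes>\<^bsub>G\<^esub> vy) y (H (n - m))) ws
        = (\<lambda>h. cup_k m (F m) (H (n - m)) ws * S h)" for m
    proof -
      have "set (take m ws) \<subseteq> ?W" using ws by (auto simp: cochain_dom_def dest: in_set_takeD)
      from gprod_comm[OF gr sg g0c Wcomm this]
      have tP: "gprod G (take m ws) \<in> P" and tc: "gprod G (take m ws) \<otimes>\<^bsub>G\<^esub> g0 = g0 \<otimes>\<^bsub>G\<^esub> gprod G (take m ws)"
        by auto
      have tcar: "gprod G (take m ws) \<in> carrier G" using tP PG by auto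
      have fixY: "conj_act G (gprod G (take m ws)) Yv = Yv"
        unfolding Yv_def by (rule conj_fix[OF gr fin ifix PG iso tP g0c pm tc])
      have "conj_act G (gprod G (take m ws)) (theta G i s (w \<otimes>\<^bsub>G\<^esub> uy) (w \<otimes>\<^bsub>G\<^esub> vy) y (H (n - m)) (drop m ws))
          = (\<lambda>h. H (n - m) (drop m ws) * Yv h)"
        using fixY unfolding theta_def g0eq Yv_def[symmetric] conj_act_def bimod_cj[OF gr tcar fin] cj_scal
        by simp
      thus ?thesis
        unfolding cup_A_def theta_def X_def[symmetric] g0eq Yv_def[symmetric]
        by (simp add: cup_k_def gmult_scal XY)
    qed
    show ?thesis
    proof (rule ext)
      fix h
      show "(gcup_A G n (\<lambda>m. theta G i s ux vx x (F m))
                              (\<lambda>m. theta G i s (w \<otimes>\<^bsub>G\<^esub> uy) (w \<otimes>\<^bsub>G\<^esub> vy) y (H m)) ws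
                - (\<Sum>z\<in>Z. \<Sum>(u', v')\<in>A z.
                     (\<lambda>h. \<alpha> z * theta G i s u' v' z (gcup_k n F H) ws h))) h = (0 :: 'g \<Rightarrow> 'k) h"
        unfolding gcup_A_def cup S_def
        apply (simp add: sum_app split_def theta_def gcup_k_def sum_distrib_left sum_distrib_right mult_ac)
        apply (subst sum.swap)
        apply (rule sum.cong[OF refl])
        apply (subst sum.swap)
        apply (simp add: mult_ac)
        done
    qed
  qed
  have zS: "(0 :: 'g \<Rightarrow> 'k) \<in> source_alg G i"
  proof -
    have "gmult G (gmult G i 0) i = (0 :: 'g \<Rightarrow> 'k)" by (rule ext) (simp add: gmult_def)
    moreover have "(0 :: 'g \<Rightarrow> 'k) \<in> galg G" by (simp add: galg_def)
    ultimately show ?thesis unfolding source_alg_def by force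
  qed
  have sz: "(\<Sum>j\<in>J. if even j then (0 :: 'g \<Rightarrow> 'k) else - 0) = 0" for J :: "nat set"
    by (intro sum.neutral ballI) (auto simp: fun_Compl_def zero_fun_def)
  have c0: "conj_act G t (0 :: 'g \<Rightarrow> 'k) = 0" for t
    by (rule ext) (simp add: conj_act_def bimod_act_def gmult_def)
  show ?thesis
  proof
    fix n
    show "is_coboundary G ?W (source_alg G i) (conj_act G) n
            (\<lambda>ws. gcup_A G n (\<lambda>m. theta G i s ux vx x (F m))
                              (\<lambda>m. theta G i s (w \<otimes>\<^bsub>G\<^esub> uy) (w \<otimes>\<^bsub>G\<^esub> vy) y (H m)) ws
                - (\<Sum>z\<in>Z. \<Sum>(u', v')\<in>A z.
                     (\<lambda>h. \<alpha> z * theta G i s u' v' z (gcup_k n F H) ws h)))"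
      unfolding is_coboundary_def
      using key zS
      by (auto intro!: exI[of _ "\<lambda>_. 0"] simp: cobound_def c0 sgn_nat_def sz)
  qed
qed

end
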